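(* Let $d$ be a positive integer, let $\kappa,\mu,\nu$ be $d$-partitions with $\mu\succ\kappa\prec\nu$, and let $m$ be a nonnegative integer such that $\kappa_d=0$ or $m=0$. Then there exists a unique $d$-partition $\rho$ such that the cell with entry $m$ and bottom-left, top-left, bottom-right, top-right corners $\kappa,\mu,\nu,\rho$ satisfies the $d$-RSK local rule.
   Context: Partitions: finite weakly decreasing sequences of positive integers, $\lambda_i=0$ for $i>\ell(\lambda)$; $d$-partitions have $\ell\le d$; $\alpha\prec\beta$ (also $\beta\succ\alpha$) means $\beta_1\ge\alpha_1\ge\beta_2\ge\alpha_2\ge\cdots$. The $d$-RSK local rule for a cell with entry $m$ and corners $\kappa$ (bottom-left), $\mu$ (top-left), $\nu$ (bottom-right), $\rho$ (top-right) requires: all four are $d$-partitions, $\mu\succ\kappa\prec\nu$, $\mu\prec\rho\succ\nu$, $m=0$ or $\kappa_d=0$, $\rho_1+\kappa_d=m+\min(\mu_d,\nu_d)+\max(\mu_1,\nu_1)$, and $\rho_i+\kappa_{i-1}=\min(\mu_{i-1},\nu_{i-1})+\max(\mu_i,\nu_i)$ for $2\le i\le d$. *)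

theory Defs
  imports Main
begin

definition is_partition :: "nat list \<Rightarrow> bool" where
  "is_partition xs \<longleftrightarrow> sorted_wrt (\<ge>) xs \<and> (\<forall>x\<in>set xs. 0 < x)"

text \<open>The i-th part (1-indexed), with lambda_i = 0 for i > length.\<close>
definition part :: "nat list \<Rightarrow> nat \<Rightarrow> nat" where
  "part xs i = (if 1 \<le> i \<and> i \<le> length xs then xs ! (i - 1) else 0)"

definition d_partition :: "nat \<Rightarrow> nat list \<Rightarrow> bool" where
  "d_partition d xs \<longleftrightarrow> is_partition xs \<and> length xs \<le> d"

text \<open>interlaces a b  means  a \<prec> b, i.e. b_1 \<ge> a_1 \<ge> b_2 \<ge> a_2 \<ge> ...\<close>
definition interlaces :: "nat list \<Rightarrow> nat list \<Rightarrow> bool" where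
  "interlaces a b \<longleftrightarrow> (\<forall>i\<ge>1. part a i \<le> part b i \<and> part b (Suc i) \<le> part a i)"

text \<open>d-RSK local rule for a cell with entry m and corners
  kappa (bottom-left), mu (top-left), nu (bottom-right), rho (top-right).\<close>
definition rsk_local :: "nat \<Rightarrow> nat \<Rightarrow> nat list \<Rightarrow> nat list \<Rightarrow> nat list \<Rightarrow> nat list \<Rightarrow> bool" where
  "rsk_local d m \<kappa> \<mu> \<nu> \<rho> \<longleftrightarrow>
     d_partition d \<kappa> \<and> d_partition d \<mu> \<and> d_partition d \<nu> \<and> d_partition d \<rho> \<and>
     interlaces \<kappa> \<mu> \<and> interlaces \<kappa> \<nu> \<and> interlaces \<mu> \<rho> \<and> interlaces \<nu> \<rho> \<and>
     (m = 0 \<or> part \<kappa> d = 0) \<and>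
     part \<rho> 1 + part \<kappa> d = m + min (part \<mu> d) (part \<nu> d) + max (part \<mu> 1) (part \<nu> 1) \<and>
     (\<forall>i. 2 \<le> i \<and> i \<le> d \<longrightarrow>
        part \<rho> i + part \<kappa> (i - 1) = min (part \<mu> (i - 1)) (part \<nu> (i - 1)) + max (part \<mu> i) (part \<nu> i))"

end

theory Submission
  imports Defs
begin

lemma aux1: "(a::nat) \<le> b \<Longrightarrow> b + c - a + a = b + c" by simp
lemma aux2: "(a::nat) \<le> b \<Longrightarrow> m + b + c - a + a = m + b + c" by simp

lemma part_big: "length xs < i \<Longrightarrow> part xs i = 0"
  by (simp add: part_def)

lemma part_nth: "i < length xs \<Longrightarrow> part xs (Suc i) = xs ! i"
  by (simp add: part_def)

lemma partition_unique:
  assumes "is_partition xs" "length xs \<le> d" "is_partition ys" "length ys \<le> d"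
    and eq: "\<forall>i. 1 \<le> i \<and> i \<le> d \<longrightarrow> part xs i = part ys i"
  shows "xs = ys"
proof -
  have pos: "\<And>zs i. is_partition zs \<Longrightarrow> i < length zs \<Longrightarrow> 0 < zs ! i"
    by (auto simp: is_partition_def)
  have key: "\<not> length as < length bs"
    if "is_partition bs" "length bs \<le> d" "\<forall>i. 1 \<le> i \<and> i \<le> d \<longrightarrow> part as i = part bs i"
    for as bs :: "nat list"
  proof
    assume l: "length as < length bs"
    have "part bs (Suc (length as)) = bs ! length as" using l by (rule part_nth)
    moreover have "0 < bs ! length as" using pos[OF that(1) l] .
    moreover have "part as (Suc (length as)) = 0" by (simp add: part_def)
    moreover have "part as (Suc (length as)) = part bs (Suc (length as))"
      using that(3) l that(2) by simp
    ultimately show False by simp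
  qed
  have len: "length xs = length ys"
    using key[of ys xs] key[of xs ys] assms by (metis linorder_neqE_nat)
  show ?thesis
  proof (rule nth_equalityI[OF len])
    fix i assume i: "i < length xs"
    then have "part xs (Suc i) = part ys (Suc i)" using eq assms(2) by simp
    then show "xs ! i = ys ! i" using i len by (simp add: part_nth)
  qed
qed

lemma partition_exists:
  assumes "\<forall>i j. 1 \<le> i \<longrightarrow> i \<le> j \<longrightarrow> j \<le> d \<longrightarrow> f j \<le> (f i :: nat)"
  shows "\<exists>xs. is_partition xs \<and> length xs \<le> d \<and> (\<forall>i. 1 \<le> i \<and> i \<le> d \<longrightarrow> part xs i = f i)"
  using assms
proof (induction d)
  case 0
  show ?case by (rule exI[of _ "[]"]) (simp add: is_partition_def)
next
  case (Suc d)
  show ?case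
  proof (cases "f (Suc d) = 0")
    case True
    from Suc obtain xs where xs: "is_partition xs" "length xs \<le> d"
      "\<forall>i. 1 \<le> i \<and> i \<le> d \<longrightarrow> part xs i = f i" by auto
    have "\<forall>i. 1 \<le> i \<and> i \<le> Suc d \<longrightarrow> part xs i = f i"
    proof (intro allI impI)
      fix i assume i: "1 \<le> i \<and> i \<le> Suc d"
      show "part xs i = f i"
      proof (cases "i = Suc d")
        case True
        then show ?thesis using xs(2) part_big[of xs "Suc d"] \<open>f (Suc d) = 0\<close> by simp
      next
        case False then show ?thesis using xs(3) i by simp
      qed
    qed
    then show ?thesis using xs by (intro exI[of _ xs]) simp
  next
    case False
    define xs where "xs = map f [1..<Suc (Suc d)]"
    have len: "length xs = Suc d" by (simp add: xs_def)
    have nth: "xs ! i = f (Suc i)" if "i < Suc d" for i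
      using that by (simp add: xs_def nth_map nth_upt del: upt_Suc)
    have "sorted_wrt (\<ge>) xs"
      unfolding sorted_wrt_iff_nth_less
    proof (intro allI impI)
      fix i j assume "i < j" "j < length xs"
      then show "xs ! j \<le> xs ! i" using nth len Suc.prems by simp
    qed
    moreover have "\<forall>x\<in>set xs. 0 < x"
    proof
      fix x assume "x \<in> set xs"
      then obtain i where i: "i < Suc d" "x = xs ! i" using len by (metis in_set_conv_nth)
      then have "f (Suc d) \<le> x" using Suc.prems nth by simp
      then show "0 < x" using False by simp
    qed
    moreover have "\<forall>i. 1 \<le> i \<and> i \<le> Suc d \<longrightarrow> part xs i = f i"
    proof (intro allI impI)
      fix i assume i: "1 \<le> i \<and> i \<le> Suc d"
      then obtain k where k: "i = Suc k" "k < Suc d" by (cases i) auto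
      show "part xs i = f i" using k len nth part_nth[of k xs] by simp
    qed
    ultimately show ?thesis using len by (intro exI[of _ xs]) (simp add: is_partition_def)
  qed
qed

theorem lemma6p1:
  fixes d m :: nat and \<kappa> \<mu> \<nu> :: "nat list"
  assumes "0 < d"
    and "d_partition d \<kappa>" and "d_partition d \<mu>" and "d_partition d \<nu>"
    and "interlaces \<kappa> \<mu>" and "interlaces \<kappa> \<nu>"
    and "part \<kappa> d = 0 \<or> m = 0"
  shows "\<exists>!\<rho>. rsk_local d m \<kappa> \<mu> \<nu> \<rho>"
proof -
  have km: "part \<kappa> i \<le> part \<mu> i \<and> part \<mu> (Suc i) \<le> part \<kappa> i" if "1 \<le> i" for i
    using assms(5) that unfolding interlaces_def by blast
  have kn: "part \<kappa> i \<le> part \<nu> i \<and> part \<nu> (Suc i) \<le> part \<kappa> i" if "1 \<le> i" for i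
    using assms(6) that unfolding interlaces_def by blast
  define r where "r i = (if i = 1 then m + min (part \<mu> d) (part \<nu> d) + max (part \<mu> 1) (part \<nu> 1) - part \<kappa> d
     else min (part \<mu> (i-1)) (part \<nu> (i-1)) + max (part \<mu> i) (part \<nu> i) - part \<kappa> (i-1))" for i
  have kd: "part \<kappa> d \<le> min (part \<mu> d) (part \<nu> d)" using km[of d] kn[of d] assms(1) by simp
  have r1: "r 1 + part \<kappa> d = m + min (part \<mu> d) (part \<nu> d) + max (part \<mu> 1) (part \<nu> 1)"
  proof -
    have "part \<kappa> d \<le> m + min (part \<mu> d) (part \<nu> d) + max (part \<mu> 1) (part \<nu> 1)"
      using kd by linarith
    have "r 1 = m + min (part \<mu> d) (part \<nu> d) + max (part \<mu> 1) (part \<nu> 1) - part \<kappa> d"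
      unfolding r_def by simp
    then show ?thesis using aux2[OF kd] by simp
  qed
  have ri: "r i + part \<kappa> (i-1) = min (part \<mu> (i-1)) (part \<nu> (i-1)) + max (part \<mu> i) (part \<nu> i)"
    if "2 \<le> i" for i
  proof -
    have "part \<kappa> (i-1) \<le> min (part \<mu> (i-1)) (part \<nu> (i-1))"
      using that km[of "i-1"] kn[of "i-1"] by simp
    moreover have "i \<noteq> 1" using that by simp
    ultimately have "r i = min (part \<mu> (i-1)) (part \<nu> (i-1)) + max (part \<mu> i) (part \<nu> i) - part \<kappa> (i-1)"
      unfolding r_def by simp
    then show ?thesis using aux1[OF \<open>part \<kappa> (i-1) \<le> _\<close>] by simp
  qed
  have rlo: "max (part \<mu> i) (part \<nu> i) \<le> r i" if "1 \<le> i" for i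
  proof (cases "i = 1")
    case True then show ?thesis unfolding True using r1 kd by linarith
  next
    case False
    then have "2 \<le> i" using that by simp
    have "part \<kappa> (i-1) \<le> min (part \<mu> (i-1)) (part \<nu> (i-1))"
      using \<open>2 \<le> i\<close> km[of "i-1"] kn[of "i-1"] by simp
    then show ?thesis using ri[OF \<open>2 \<le> i\<close>] by linarith
  qed
  have rhi: "r (Suc i) \<le> min (part \<mu> i) (part \<nu> i)" if "1 \<le> i" for i
  proof -
    have "2 \<le> Suc i" using that by simp
    from ri[OF this] have "r (Suc i) + part \<kappa> i = min (part \<mu> i) (part \<nu> i) + max (part \<mu> (Suc i)) (part \<nu> (Suc i))"
      by simp
    moreover have "max (part \<mu> (Suc i)) (part \<nu> (Suc i)) \<le> part \<kappa> i" using km[OF that] kn[OF that] by simp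
    ultimately show ?thesis by linarith
  qed
  have anti: "\<forall>i j. 1 \<le> i \<longrightarrow> i \<le> j \<longrightarrow> j \<le> d \<longrightarrow> r j \<le> r i"
  proof (intro allI impI)
    fix i j :: nat assume "1 \<le> i" "i \<le> j" "j \<le> d"
    from \<open>i \<le> j\<close> \<open>1 \<le> i\<close> show "r j \<le> r i"
    proof (induction j rule: dec_induct)
      case base then show ?case by simp
    next
      case (step k)
      have "1 \<le> k" using step by simp
      have "r (Suc k) \<le> r k" using rhi[OF \<open>1 \<le> k\<close>] rlo[OF \<open>1 \<le> k\<close>] by linarith
      then show ?case using step by simp
    qed
  qed
  obtain \<rho> where \<rho>: "is_partition \<rho>" "length \<rho> \<le> d" "\<forall>i. 1 \<le> i \<and> i \<le> d \<longrightarrow> part \<rho> i = r i"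
    using partition_exists[OF anti] by blast
  have il: "interlaces \<alpha> \<rho>" if "d_partition d \<alpha>"
    "\<And>i. 1 \<le> i \<Longrightarrow> part \<alpha> i \<le> r i" "\<And>i. 1 \<le> i \<Longrightarrow> r (Suc i) \<le> part \<alpha> i" for \<alpha>
    unfolding interlaces_def
  proof (intro allI impI conjI)
    fix i :: nat assume "1 \<le> i"
    show "part \<alpha> i \<le> part \<rho> i"
    proof (cases "i \<le> d")
      case True then show ?thesis using \<rho>(3) that(2) \<open>1 \<le> i\<close> by simp
    next
      case False
      then have "length \<alpha> < i" using that(1) by (simp add: d_partition_def)
      then show ?thesis using part_big[of \<alpha> i] by simp
    qed
    show "part \<rho> (Suc i) \<le> part \<alpha> i"
    proof (cases "Suc i \<le> d")
      case True then show ?thesis using \<rho>(3) that(3) \<open>1 \<le> i\<close> by simp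
    next
      case False then show ?thesis using \<rho>(2) part_big[of \<rho> "Suc i"] by simp
    qed
  qed
  have im: "interlaces \<mu> \<rho>"
    by (rule il[OF assms(3)]) (use rlo rhi in \<open>fastforce+\<close>)
  have inu: "interlaces \<nu> \<rho>"
    by (rule il[OF assms(4)]) (use rlo rhi in \<open>fastforce+\<close>)
  have p1: "part \<rho> 1 = r 1" using \<rho>(3) assms(1) by simp
  have ex: "rsk_local d m \<kappa> \<mu> \<nu> \<rho>"
    unfolding rsk_local_def
  proof (intro conjI)
    show "d_partition d \<rho>" using \<rho> by (simp add: d_partition_def)
    show "m = 0 \<or> part \<kappa> d = 0" using assms(7) by auto
    show "part \<rho> 1 + part \<kappa> d = m + min (part \<mu> d) (part \<nu> d) + max (part \<mu> 1) (part \<nu> 1)"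
      using r1 p1 by simp
    show "\<forall>i. 2 \<le> i \<and> i \<le> d \<longrightarrow> part \<rho> i + part \<kappa> (i - 1) =
       min (part \<mu> (i - 1)) (part \<nu> (i - 1)) + max (part \<mu> i) (part \<nu> i)"
    proof (intro allI impI)
      fix i assume "2 \<le> i \<and> i \<le> d"
      then show "part \<rho> i + part \<kappa> (i - 1) =
       min (part \<mu> (i - 1)) (part \<nu> (i - 1)) + max (part \<mu> i) (part \<nu> i)"
        using ri[of i] \<rho>(3) by simp
    qed
  qed (fact assms im inu)+
  show ?thesis
  proof (rule ex1I[of "\<lambda>x. rsk_local d m \<kappa> \<mu> \<nu> x" \<rho>, OF ex])
    fix \<sigma> assume s: "rsk_local d m \<kappa> \<mu> \<nu> \<sigma>"
    have "\<forall>i. 1 \<le> i \<and> i \<le> d \<longrightarrow> part \<sigma> i = part \<rho> i"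
    proof (intro allI impI)
      fix i assume i: "1 \<le> i \<and> i \<le> d"
      show "part \<sigma> i = part \<rho> i"
      proof (cases "i = 1")
        case True
        have "part \<sigma> 1 + part \<kappa> d = m + min (part \<mu> d) (part \<nu> d) + max (part \<mu> 1) (part \<nu> 1)"
          using s unfolding rsk_local_def by blast
        then show ?thesis using True r1 p1 by simp
      next
        case False
        then have i2: "2 \<le> i \<and> i \<le> d" using i by simp
        have "part \<sigma> i + part \<kappa> (i - 1) = min (part \<mu> (i - 1)) (part \<nu> (i - 1)) + max (part \<mu> i) (part \<nu> i)"
          using s i2 unfolding rsk_local_def by blast
        then show ?thesis using ri[of i] \<rho>(3) i2 by simp
      qed
    qed
    moreover have "d_partition d \<sigma>" using s unfolding rsk_local_def by blast
    ultimately show "\<sigma> = \<rho>"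
      using partition_unique[of \<sigma> d \<rho>] \<rho> by (simp add: d_partition_def)
  qed
qed

end
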